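(* For every $A\subseteq\mathbb{N}$, $$\underline{\underline{d}}(A)\le\underline{d}_\infty(A)\le\overline{d}_\infty(A)\le\overline{\overline{d}}(A).$$
   Context: $\mathbb{N}=\{1,2,3,\dots\}$. For $A\subseteq\mathbb{N}$ let $A(n)=|A\cap[1,n]|$; $\mathcal{D}$ is the collection of sets for which $d(A)=\lim_{n\to\infty}A(n)/n$ exists; $\underline{\underline{d}}(A)=\sup\{d(B);\ B\subseteq A,\ B\in\mathcal{D}\}$ and $\overline{\overline{d}}(A)=\inf\{d(C);\ C\supseteq A,\ C\in\mathcal{D}\}$. For $\alpha\ge-1$ put $A_\alpha(n)=\sum_{k=1}^n\chi_A(k)k^\alpha$, $\mathbb{N}_\alpha(n)=\sum_{k=1}^nk^\alpha$, $\underline{d}_\alpha(A)=\liminf_{n\to\infty}\frac{A_\alpha(n)}{\mathbb{N}_\alpha(n)}$, $\overline{d}_\alpha(A)=\limsup_{n\to\infty}\frac{A_\alpha(n)}{\mathbb{N}_\alpha(n)}$, $\underline{d}_\infty(A)=\inf_{\alpha\ge-1}\underline{d}_\alpha(A)$ and $\overline{d}_\infty(A)=\sup_{\alpha\ge-1}\overline{d}_\alpha(A)$ (these equal $\lim_{\alpha\to\infty}\underline{d}_\alpha(A)$ and $\lim_{\alpha\to\infty}\overline{d}_\alpha(A)$ respectively). *)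

theory Defs
  imports "HOL-Analysis.Analysis"
begin

definition cnt :: "nat set \<Rightarrow> nat \<Rightarrow> nat" where
  "cnt A n = card (A \<inter> {1..n})"

definition has_density :: "nat set \<Rightarrow> real \<Rightarrow> bool" where
  "has_density A d \<longleftrightarrow> (\<lambda>n. real (cnt A n) / real n) \<longlonglongrightarrow> d"

definition Dens :: "nat set set" where
  "Dens = {A. \<exists>d. has_density A d}"

definition dens :: "nat set \<Rightarrow> real" where
  "dens A = lim (\<lambda>n. real (cnt A n) / real n)"

definition lower_dd :: "nat set \<Rightarrow> real" where
  "lower_dd A = Sup {dens B | B. B \<subseteq> A \<and> B \<in> Dens}"

definition upper_dd :: "nat set \<Rightarrow> real" where
  "upper_dd A = Inf {dens C | C. A \<subseteq> C \<and> C \<in> Dens}"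

definition A_alpha :: "real \<Rightarrow> nat set \<Rightarrow> nat \<Rightarrow> real" where
  "A_alpha \<alpha> A n = (\<Sum>k\<in>A \<inter> {1..n}. real k powr \<alpha>)"

definition N_alpha :: "real \<Rightarrow> nat \<Rightarrow> real" where
  "N_alpha \<alpha> n = (\<Sum>k=1..n. real k powr \<alpha>)"

definition lower_d_alpha :: "real \<Rightarrow> nat set \<Rightarrow> ereal" where
  "lower_d_alpha \<alpha> A = liminf (\<lambda>n. ereal (A_alpha \<alpha> A n / N_alpha \<alpha> n))"

definition upper_d_alpha :: "real \<Rightarrow> nat set \<Rightarrow> ereal" where
  "upper_d_alpha \<alpha> A = limsup (\<lambda>n. ereal (A_alpha \<alpha> A n / N_alpha \<alpha> n))"

definition lower_d_inf :: "nat set \<Rightarrow> ereal" where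
  "lower_d_inf A = (INF \<alpha>\<in>{-1..}. lower_d_alpha \<alpha> A)"

definition upper_d_inf :: "nat set \<Rightarrow> ereal" where
  "upper_d_inf A = (SUP \<alpha>\<in>{-1..}. upper_d_alpha \<alpha> A)"

end

theory Submission imports Defs begin

lemma abel:
  fixes f w :: "nat \<Rightarrow> real"
  shows "(\<Sum>k<n. (f (Suc k) - f k) * w (Suc k)) = f n * w n - f 0 * w 0 + (\<Sum>k<n. f k * (w k - w (Suc k)))"
  by (induction n) (simp_all add: algebra_simps)

lemma N_alt: "N_alpha \<alpha> n = (\<Sum>k<n. real (Suc k) powr \<alpha>)"
  unfolding N_alpha_def using sum.atLeast1_atMost_eq[of "\<lambda>k. real k powr \<alpha>" n] by simp

lemma A_alt: "A_alpha \<alpha> B n = (\<Sum>k<n. (if Suc k \<in> B then 1 else 0) * real (Suc k) powr \<alpha>)"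
proof -
  have "A_alpha \<alpha> B n = (\<Sum>k\<in>{1..n}. (if k \<in> B then 1 else 0) * real k powr \<alpha>)"
  proof -
    have "A_alpha \<alpha> B n = (\<Sum>k\<in>{1..n}. (if k \<in> B then real k powr \<alpha> else 0))"
      unfolding A_alpha_def using sum.inter_restrict[of "{1..n}" "\<lambda>k. real k powr \<alpha>" B]
      by (simp add: Int_commute)
    then show ?thesis by (auto intro!: sum.cong)
  qed
  also have "\<dots> = (\<Sum>k<n. (if Suc k \<in> B then 1 else 0) * real (Suc k) powr \<alpha>)"
    using sum.atLeast1_atMost_eq[of "\<lambda>k. (if k \<in> B then 1 else 0) * real k powr \<alpha>" n] by simp
  finally show ?thesis .
qed

lemma cnt_0: "cnt B 0 = 0" unfolding cnt_def by simp

lemma cnt_Suc: "cnt B (Suc k) = cnt B k + (if Suc k \<in> B then 1 else 0)"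
proof -
  have "B \<inter> {1..Suc k} = (if Suc k \<in> B then insert (Suc k) (B \<inter> {1..k}) else B \<inter> {1..k})"
    by (auto simp: le_Suc_eq)
  then show ?thesis unfolding cnt_def by auto
qed

lemma cnt_le: "cnt B n \<le> n"
proof -
  have "cnt B n \<le> card {1..n}" unfolding cnt_def by (rule card_mono) auto
  then show ?thesis by simp
qed

lemma N_pos: "n \<ge> 1 \<Longrightarrow> N_alpha \<alpha> n > 0"
  unfolding N_alpha_def by (intro sum_pos) auto

lemma N_ge_harm: assumes "\<alpha> \<ge> -1" shows "N_alpha \<alpha> n \<ge> harm n"
  unfolding N_alt harm_altdef
proof (rule sum_mono)
  fix k assume "k \<in> {..<n}"
  have "inverse (real (Suc k)) = real (Suc k) powr (-1)" by (simp add: powr_minus)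
  also have "\<dots> \<le> real (Suc k) powr \<alpha>" using assms by (intro powr_mono) auto
  finally show "inverse (real (Suc k)) \<le> real (Suc k) powr \<alpha>" .
qed

lemma N_at_top: assumes "\<alpha> \<ge> -1" shows "filterlim (N_alpha \<alpha>) at_top sequentially"
  using filterlim_at_top_mono[OF harm_at_top] N_ge_harm[OF assms] by auto

lemma growth_pos:
  assumes "\<alpha> \<ge> 0" "n \<ge> 1"
  shows "real n * real n powr \<alpha> \<le> 2 powr (\<alpha>+1) * N_alpha \<alpha> n"
proof -
  define m where "m = n div 2"
  have sub: "{n-m..n} \<subseteq> {1..n}" using assms by (auto simp: m_def)
  have "(\<Sum>k\<in>{n-m..n}. real k powr \<alpha>) \<le> N_alpha \<alpha> n"
    unfolding N_alpha_def by (rule sum_mono2[OF _ sub]) auto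
  moreover have "real (card {n-m..n}) * (real n / 2) powr \<alpha> \<le> (\<Sum>k\<in>{n-m..n}. real k powr \<alpha>)"
  proof (rule sum_bounded_below)
    fix k assume "k \<in> {n-m..n}"
    then have "real n / 2 \<le> real k" by (auto simp: m_def)
    then show "(real n / 2) powr \<alpha> \<le> real k powr \<alpha>" using assms by (intro powr_mono2) auto
  qed
  moreover have "card {n-m..n} = m + 1" by (simp add: m_def)
  moreover have "real n / 2 \<le> real m + 1" unfolding m_def by linarith
  ultimately have h: "(real n / 2) * (real n / 2) powr \<alpha> \<le> N_alpha \<alpha> n"
    by (smt (verit, best) mult_right_mono powr_ge_zero of_nat_1 of_nat_add)
  have eq: "real n * real n powr \<alpha> = 2 powr (\<alpha>+1) * ((real n / 2) * (real n / 2) powr \<alpha>)"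
    by (simp add: powr_add powr_divide)
  show ?thesis using mult_left_mono[OF h, of "2 powr (\<alpha>+1)"] eq by (metis powr_ge_zero)
qed

lemma growth_neg:
  assumes "\<alpha> \<le> 0"
  shows "real n * real n powr \<alpha> \<le> N_alpha \<alpha> n"
proof -
  have "real (card {..<n}) * real n powr \<alpha> \<le> (\<Sum>k<n. real (Suc k) powr \<alpha>)"
    by (rule sum_bounded_below) (use assms in \<open>auto intro!: powr_mono2'\<close>)
  then show ?thesis by (simp add: N_alt)
qed

lemma N_nonneg: "N_alpha \<alpha> n \<ge> 0" unfolding N_alpha_def by (intro sum_nonneg) auto

lemma weighted_density:
  assumes hd: "has_density B d" and a: "\<alpha> \<ge> -1"
  shows "(\<lambda>n. A_alpha \<alpha> B n / N_alpha \<alpha> n) \<longlonglongrightarrow> d"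
proof -
  define w where "w k = real k powr \<alpha>" for k
  define e where "e k = real (cnt B k) - d * real k" for k
  have e0: "e 0 = 0" by (simp add: e_def cnt_0)
  have w0: "w k \<ge> 0" for k by (simp add: w_def)
  have id1: "A_alpha \<alpha> B n - d * N_alpha \<alpha> n = e n * w n + (\<Sum>k<n. e k * (w k - w (Suc k)))" for n
  proof -
    have "(\<Sum>k<n. (e (Suc k) - e k) * w (Suc k)) = A_alpha \<alpha> B n - d * N_alpha \<alpha> n"
      unfolding A_alt N_alt sum_distrib_left sum_subtractf[symmetric]
      by (intro sum.cong) (auto simp: e_def w_def cnt_Suc algebra_simps)
    then show ?thesis using abel[of e w n] e0 by simp
  qed
  have id2: "N_alpha \<alpha> n = real n * w n + (\<Sum>k<n. real k * (w k - w (Suc k)))" for n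
    using abel[of real w n] unfolding N_alt w_def by simp
  define S where "S n = (\<Sum>k<n. real k * \<bar>w k - w (Suc k)\<bar>)" for n
  have S_le: "S n \<le> N_alpha \<alpha> n + real n * w n" for n
  proof (cases "\<alpha> \<ge> 0")
    case True
    have "w k \<le> w (Suc k)" for k using True by (auto simp: w_def intro!: powr_mono2)
    then have "S n = (\<Sum>k<n. - (real k * (w k - w (Suc k))))"
      unfolding S_def by (intro sum.cong) (auto simp: algebra_simps)
    also have "\<dots> = real n * w n - N_alpha \<alpha> n" using id2[of n] by (simp add: sum_negf)
    finally show ?thesis using N_nonneg[of \<alpha> n] w0[of n] by simp
  next
    case False
    have "real k * \<bar>w k - w (Suc k)\<bar> = real k * (w k - w (Suc k))" for k
    proof (cases "k = 0")
      case False
      then have "w (Suc k) \<le> w k" using \<open>\<not> \<alpha> \<ge> 0\<close> by (auto simp: w_def intro!: powr_mono2')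
      then show ?thesis by simp
    qed simp
    then have "S n = (\<Sum>k<n. real k * (w k - w (Suc k)))"
      unfolding S_def by (intro sum.cong) auto
    also have "\<dots> = N_alpha \<alpha> n - real n * w n" using id2[of n] by simp
    finally show ?thesis using N_nonneg[of \<alpha> n] w0[of n] by simp
  qed
  define c where "c = 2 powr (\<alpha>+1) + 1"
  have c0: "c > 0" by (simp add: c_def add_pos_nonneg)
  have G: "real n * w n \<le> c * N_alpha \<alpha> n" if "n \<ge> 1" for n
  proof (cases "\<alpha> \<ge> 0")
    case True
    then have "real n * w n \<le> 2 powr (\<alpha>+1) * N_alpha \<alpha> n"
      using growth_pos[OF True that] by (simp add: w_def)
    also have "\<dots> \<le> c * N_alpha \<alpha> n" unfolding c_def
      using N_nonneg[of \<alpha> n] by (intro mult_right_mono) auto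
    finally show ?thesis .
  next
    case False
    then have "real n * w n \<le> N_alpha \<alpha> n" using growth_neg[of \<alpha> n] by (simp add: w_def)
    also have "\<dots> \<le> c * N_alpha \<alpha> n" unfolding c_def
      using N_nonneg[of \<alpha> n] mult_left_mono[of 1 "2 powr (\<alpha>+1) + 1" "N_alpha \<alpha> n"]
      by (simp add: add_increasing mult.commute)
    finally show ?thesis .
  qed
  have bound: "\<bar>A_alpha \<alpha> B n - d * N_alpha \<alpha> n\<bar> \<le> \<bar>e n\<bar> * w n + (\<Sum>k<n. \<bar>e k\<bar> * \<bar>w k - w (Suc k)\<bar>)" for n
  proof -
    have "\<bar>(\<Sum>k<n. e k * (w k - w (Suc k)))\<bar> \<le> (\<Sum>k<n. \<bar>e k\<bar> * \<bar>w k - w (Suc k)\<bar>)"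
      using sum_abs[of "\<lambda>k. e k * (w k - w (Suc k))" "{..<n}"] by (simp add: abs_mult)
    then show ?thesis unfolding id1 using w0[of n] abs_triangle_ineq[of "e n * w n" "(\<Sum>k<n. e k * (w k - w (Suc k)))"]
      by (simp add: abs_mult)
  qed
  show ?thesis
  proof (rule tendstoI)
    fix \<epsilon> :: real assume \<epsilon>: "\<epsilon> > 0"
    define C where "C = 1 + 2 * c"
    have C0: "C > 0" using c0 by (simp add: C_def)
    define \<delta> where "\<delta> = \<epsilon> / (2 * C)"
    have \<delta>0: "\<delta> > 0" using \<epsilon> C0 by (simp add: \<delta>_def)
    from hd have "eventually (\<lambda>k. dist (real (cnt B k) / real k) d < \<delta>) sequentially"
      unfolding has_density_def using \<delta>0 by (rule tendstoD)
    then obtain K where K: "\<And>k. k \<ge> K \<Longrightarrow> \<bar>real (cnt B k) / real k - d\<bar> < \<delta>"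
      by (auto simp: eventually_sequentially dist_real_def)
    have eK: "\<bar>e k\<bar> \<le> \<delta> * real k" if "k \<ge> K" for k
    proof (cases "k = 0")
      case True then show ?thesis by (simp add: e0)
    next
      case False
      then have "e k = real k * (real (cnt B k) / real k - d)" by (simp add: e_def field_simps)
      then have "\<bar>e k\<bar> = real k * \<bar>real (cnt B k) / real k - d\<bar>" by (simp add: abs_mult)
      also have "\<dots> \<le> real k * \<delta>" using K[OF that] by (intro mult_left_mono) auto
      finally show ?thesis by (simp add: mult.commute)
    qed
    define M where "M = (\<Sum>k<K. \<bar>e k\<bar> * \<bar>w k - w (Suc k)\<bar>)"
    have "(\<lambda>n. M / N_alpha \<alpha> n) \<longlonglongrightarrow> 0"
      by (rule tendsto_divide_0[OF tendsto_const filterlim_at_top_imp_at_infinity[OF N_at_top[OF a]]])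
    then have ev1: "eventually (\<lambda>n. M / N_alpha \<alpha> n < \<epsilon> / 2) sequentially"
      using \<epsilon> by (intro order_tendstoD(2)) auto
    have ev2: "eventually (\<lambda>n. n \<ge> max K 1) sequentially" by (rule eventually_ge_at_top)
    show "eventually (\<lambda>n. dist (A_alpha \<alpha> B n / N_alpha \<alpha> n) d < \<epsilon>) sequentially"
      using ev1 ev2
    proof eventually_elim
      case (elim n)
      have Npos: "N_alpha \<alpha> n > 0" using elim N_pos by auto
      have s1: "(\<Sum>k<n. \<bar>e k\<bar> * \<bar>w k - w (Suc k)\<bar>) \<le>
          (\<Sum>k<n. \<delta> * (real k * \<bar>w k - w (Suc k)\<bar>) + (if k < K then \<bar>e k\<bar> * \<bar>w k - w (Suc k)\<bar> else 0))"
      proof (rule sum_mono)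
        fix k assume "k \<in> {..<n}"
        show "\<bar>e k\<bar> * \<bar>w k - w (Suc k)\<bar> \<le> \<delta> * (real k * \<bar>w k - w (Suc k)\<bar>) + (if k < K then \<bar>e k\<bar> * \<bar>w k - w (Suc k)\<bar> else 0)"
        proof (cases "k < K")
          case True then show ?thesis using \<delta>0 by simp
        next
          case False
          then have "\<bar>e k\<bar> * \<bar>w k - w (Suc k)\<bar> \<le> (\<delta> * real k) * \<bar>w k - w (Suc k)\<bar>"
            using eK[of k] by (intro mult_right_mono) auto
          then show ?thesis using False by simp
        qed
      qed
      have s2: "(\<Sum>k<n. (if k < K then \<bar>e k\<bar> * \<bar>w k - w (Suc k)\<bar> else 0)) = M"
      proof -
        have "{..<n} \<inter> {k. k < K} = {..<K}" using elim by auto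
        then show ?thesis unfolding M_def using sum.inter_restrict[of "{..<n}" "\<lambda>k. \<bar>e k\<bar> * \<bar>w k - w (Suc k)\<bar>" "{k. k<K}"]
          by simp
      qed
      have s3: "(\<Sum>k<n. \<bar>e k\<bar> * \<bar>w k - w (Suc k)\<bar>) \<le> \<delta> * S n + M"
        using s1 s2 unfolding S_def by (simp add: sum.distrib sum_distrib_left)
      have s4: "\<bar>e n\<bar> * w n \<le> \<delta> * (real n * w n)"
        using mult_right_mono[OF eK[of n] w0[of n]] elim by (simp add: mult.assoc)
      have "\<bar>A_alpha \<alpha> B n - d * N_alpha \<alpha> n\<bar> \<le> \<delta> * (real n * w n + S n) + M"
        using bound[of n] s3 s4 by (simp add: algebra_simps)
      also have "\<dots> \<le> \<delta> * (N_alpha \<alpha> n + 2 * (real n * w n)) + M"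
        using S_le[of n] \<delta>0 by (intro add_right_mono mult_left_mono) auto
      also have "\<dots> \<le> \<delta> * (C * N_alpha \<alpha> n) + M"
        using G[of n] elim \<delta>0 unfolding C_def by (intro add_right_mono mult_left_mono) (auto simp: algebra_simps)
      also have "\<dots> = \<epsilon> / 2 * N_alpha \<alpha> n + M" using C0 by (simp add: \<delta>_def)
      finally have h: "\<bar>A_alpha \<alpha> B n - d * N_alpha \<alpha> n\<bar> \<le> \<epsilon> / 2 * N_alpha \<alpha> n + M" .
      have "dist (A_alpha \<alpha> B n / N_alpha \<alpha> n) d = \<bar>A_alpha \<alpha> B n - d * N_alpha \<alpha> n\<bar> / N_alpha \<alpha> n"
        using Npos by (simp add: dist_real_def field_simps)
      also have "\<dots> \<le> (\<epsilon> / 2 * N_alpha \<alpha> n + M) / N_alpha \<alpha> n"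
        using h Npos by (intro divide_right_mono) auto
      also have "\<dots> = \<epsilon> / 2 + M / N_alpha \<alpha> n" using Npos by (simp add: field_simps)
      also have "\<dots> < \<epsilon>" using elim(1) by linarith
      finally show ?case .
    qed
  qed
qed

lemma dens_eq: "has_density B d \<Longrightarrow> dens B = d"
  unfolding dens_def has_density_def by (rule limI)

lemma dens_bounds: assumes "B \<in> Dens" shows "0 \<le> dens B" "dens B \<le> 1"
proof -
  obtain d where d: "has_density B d" using assms unfolding Dens_def by auto
  have le: "real (cnt B n) / real n \<le> 1" for n
    using cnt_le[of B n] by (cases "n = 0") (auto simp: divide_le_eq_1)
  have "0 \<le> d" using d unfolding has_density_def
    by (rule LIMSEQ_le_const) auto
  moreover have "d \<le> 1" using d unfolding has_density_def
    by (rule LIMSEQ_le_const2) (use le in auto)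
  ultimately show "0 \<le> dens B" "dens B \<le> 1" using dens_eq[OF d] by auto
qed

lemma empty_Dens: "{} \<in> Dens" "dens {} = 0"
proof -
  have "has_density {} 0" unfolding has_density_def cnt_def by simp
  then show "{} \<in> Dens" "dens {} = 0" using dens_eq unfolding Dens_def by auto
qed

lemma UNIV_Dens: "UNIV \<in> Dens"
proof -
  have "has_density UNIV 1" unfolding has_density_def cnt_def
  proof (rule LIMSEQ_offset[where k=1])
    show "(\<lambda>n. real (card (UNIV \<inter> {1..n + 1})) / real (n + 1)) \<longlonglongrightarrow> 1" by simp
  qed
  then show ?thesis unfolding Dens_def by auto
qed

lemma lower_alpha_ge:
  assumes "\<alpha> \<ge> -1" "B \<subseteq> A" "B \<in> Dens"
  shows "ereal (dens B) \<le> lower_d_alpha \<alpha> A"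
proof -
  obtain d where d: "has_density B d" using assms unfolding Dens_def by auto
  have "liminf (\<lambda>n. ereal (A_alpha \<alpha> B n / N_alpha \<alpha> n)) = ereal d"
    by (intro lim_imp_Liminf) (auto intro!: tendsto_ereal weighted_density[OF d assms(1)])
  moreover have "liminf (\<lambda>n. ereal (A_alpha \<alpha> B n / N_alpha \<alpha> n)) \<le> lower_d_alpha \<alpha> A"
    unfolding lower_d_alpha_def
  proof (intro Liminf_mono always_eventually allI)
    fix n
    have "A_alpha \<alpha> B n \<le> A_alpha \<alpha> A n" unfolding A_alpha_def
      using assms(2) by (intro sum_mono2) auto
    then show "ereal (A_alpha \<alpha> B n / N_alpha \<alpha> n) \<le> ereal (A_alpha \<alpha> A n / N_alpha \<alpha> n)"
      using N_nonneg by (simp add: divide_right_mono)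
  qed
  ultimately show ?thesis using dens_eq[OF d] by simp
qed

lemma upper_alpha_le:
  assumes "\<alpha> \<ge> -1" "A \<subseteq> C" "C \<in> Dens"
  shows "upper_d_alpha \<alpha> A \<le> ereal (dens C)"
proof -
  obtain d where d: "has_density C d" using assms unfolding Dens_def by auto
  have "limsup (\<lambda>n. ereal (A_alpha \<alpha> C n / N_alpha \<alpha> n)) = ereal d"
    by (intro lim_imp_Limsup) (auto intro!: tendsto_ereal weighted_density[OF d assms(1)])
  moreover have "upper_d_alpha \<alpha> A \<le> limsup (\<lambda>n. ereal (A_alpha \<alpha> C n / N_alpha \<alpha> n))"
    unfolding upper_d_alpha_def
  proof (intro Limsup_mono always_eventually allI)
    fix n
    have "A_alpha \<alpha> A n \<le> A_alpha \<alpha> C n" unfolding A_alpha_def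
      using assms(2) by (intro sum_mono2) auto
    then show "ereal (A_alpha \<alpha> A n / N_alpha \<alpha> n) \<le> ereal (A_alpha \<alpha> C n / N_alpha \<alpha> n)"
      using N_nonneg by (simp add: divide_right_mono)
  qed
  ultimately show ?thesis using dens_eq[OF d] by simp
qed

theorem corollary4p5:
  fixes A :: "nat set"
  assumes "0 \<notin> A"
  shows "ereal (lower_dd A) \<le> lower_d_inf A
       \<and> lower_d_inf A \<le> upper_d_inf A
       \<and> upper_d_inf A \<le> ereal (upper_dd A)"
proof (intro conjI)
  define S where "S = {dens B | B. B \<subseteq> A \<and> B \<in> Dens}"
  have S0: "0 \<in> S" unfolding S_def using empty_Dens by force
  have S1: "s \<in> S \<Longrightarrow> s \<le> 1" for s unfolding S_def using dens_bounds by auto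
  have "ereal 0 \<le> (SUP s\<in>S. ereal s)" using S0 by (rule SUP_upper)
  moreover have "(SUP s\<in>S. ereal s) \<le> ereal 1" using S1 by (intro SUP_least) auto
  ultimately have "\<bar>SUP s\<in>S. ereal s\<bar> \<noteq> \<infinity>" by auto
  then have eS: "ereal (lower_dd A) = (SUP s\<in>S. ereal s)"
    unfolding lower_dd_def S_def[symmetric] by (rule ereal_Sup)
  show "ereal (lower_dd A) \<le> lower_d_inf A"
    unfolding eS lower_d_inf_def
    by (intro INF_greatest SUP_least) (auto simp: S_def intro!: lower_alpha_ge)
next
  define T where "T = {dens C | C. A \<subseteq> C \<and> C \<in> Dens}"
  have T1: "dens UNIV \<in> T" unfolding T_def using UNIV_Dens by force
  have T0: "t \<in> T \<Longrightarrow> 0 \<le> t" for t unfolding T_def using dens_bounds by auto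
  have "bdd_below T" using T0 by (intro bdd_belowI[of _ 0]) auto
  then have eT: "ereal (upper_dd A) = (INF t\<in>T. ereal t)"
    unfolding upper_dd_def T_def[symmetric] using T1 by (intro ereal_Inf') auto
  show "upper_d_inf A \<le> ereal (upper_dd A)"
    unfolding eT upper_d_inf_def
    by (intro INF_greatest SUP_least) (auto simp: T_def intro!: upper_alpha_le)
next
  have "lower_d_inf A \<le> lower_d_alpha (-1) A" unfolding lower_d_inf_def by (rule INF_lower) auto
  also have "\<dots> \<le> upper_d_alpha (-1) A" unfolding lower_d_alpha_def upper_d_alpha_def
    by (rule Liminf_le_Limsup) simp
  also have "\<dots> \<le> upper_d_inf A" unfolding upper_d_inf_def by (rule SUP_upper) auto
  finally show "lower_d_inf A \<le> upper_d_inf A" .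
qed

end
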